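(* Let $\sigma=10$, $r=27$, $\beta=8/3$, and for $0<d\le 20$ let $F:\mathbb{R}^2\to\mathbb{R}^2$ be the map \[ F(x,y)=\Bigl(\tfrac{\sigma}{d}\Bigl(x-\tfrac{\beta r x}{\beta+x^2}\Bigr)+2x-y,\; x\Bigr). \] Then for every $0<d\le 20$ the map $F$ has a homoclinic point and infinitely many periodic points.
   Context: The fixed points of $F$ are $(0,0)$ and $\pm(\sqrt{\beta(r-1)},\sqrt{\beta(r-1)})$. A homoclinic point is a point, different from $q$, lying in the intersection of the stable and unstable manifolds $W^s(q)\cap W^u(q)$ of a hyperbolic fixed point $q$ of $F$. Periodic orbits of $F$ of period $n$ correspond to steady states of a ring of $n$ Lorenz oscillators coupled diffusively with strength $d$ in the $x$ variable. *)

theory Defs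
  imports "HOL-Analysis.Analysis"
begin

definition lorenzF :: "real \<Rightarrow> real \<Rightarrow> real \<Rightarrow> real \<Rightarrow> real \<times> real \<Rightarrow> real \<times> real" where
  "lorenzF \<sigma> r \<beta> d = (\<lambda>(x, y). (\<sigma> / d * (x - \<beta> * r * x / (\<beta> + x^2)) + 2 * x - y, x))"

text \<open>Hyperbolic fixed point of a planar map: fixed, differentiable there, and the
  Jacobian (a b; c e) has no eigenvalue on the complex unit circle, i.e. its
  characteristic polynomial z^2 - tr z + det has no root of modulus 1.\<close>
definition hyperbolic_fixed_point :: "(real \<times> real \<Rightarrow> real \<times> real) \<Rightarrow> real \<times> real \<Rightarrow> bool" where
  "hyperbolic_fixed_point F q \<longleftrightarrow> F q = q \<and>
     (\<exists>F'. (F has_derivative F') (at q) \<and>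
        (let a = fst (F' (1, 0)); c = snd (F' (1, 0));
             b = fst (F' (0, 1)); e = snd (F' (0, 1))
         in \<forall>z::complex. cmod z = 1 \<longrightarrow>
              z^2 - complex_of_real (a + e) * z + complex_of_real (a * e - b * c) \<noteq> 0))"

definition stable_set :: "('a \<Rightarrow> 'a) \<Rightarrow> 'a::topological_space \<Rightarrow> 'a set" where
  "stable_set F q = {p. (\<lambda>n. (F ^^ n) p) \<longlonglongrightarrow> q}"

definition unstable_set :: "('a \<Rightarrow> 'a) \<Rightarrow> 'a::topological_space \<Rightarrow> 'a set" where
  "unstable_set F q = {p. \<exists>s::nat \<Rightarrow> 'a. s 0 = p \<and> (\<forall>n. F (s (Suc n)) = s n) \<and> s \<longlonglongrightarrow> q}"

definition homoclinic_point :: "(real \<times> real \<Rightarrow> real \<times> real) \<Rightarrow> real \<times> real \<Rightarrow> bool" where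
  "homoclinic_point F p \<longleftrightarrow>
     (\<exists>q. hyperbolic_fixed_point F q \<and> p \<noteq> q \<and> p \<in> stable_set F q \<and> p \<in> unstable_set F q)"

definition periodic_points :: "('a \<Rightarrow> 'a) \<Rightarrow> 'a set" where
  "periodic_points F = {p. \<exists>n>0. (F ^^ n) p = p}"

end

theory Submission
  imports Defs
begin


definition hc :: "real \<Rightarrow> real \<Rightarrow> real" where
  "hc c x = c * (x - 8/3 * 27 * x / (8/3 + x^2)) + 2 * x"

lemma lorenz_eq: "lorenzF 10 27 (8/3) d = (\<lambda>(x, y). (hc (10/d) x - y, x))"
  unfolding lorenzF_def hc_def by (auto simp: fun_eq_iff)

lemma hc_diff: "hc c u - hc c v = (u - v) * (2 + c - 72 * c * (8/3 - u * v) / ((8/3 + u^2) * (8/3 + v^2)))"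
proof -
  define A where "A = 8/3 + u^2"
  define B where "B = 8/3 + v^2"
  have p1: "A > (0::real)" unfolding A_def by (simp add: add_pos_nonneg)
  have p2: "B > (0::real)" unfolding B_def by (simp add: add_pos_nonneg)
  have e1: "u / A - v / B = (u * B - v * A) / (A * B)" using p1 p2 by (simp add: field_simps)
  have e2: "u * B - v * A = (u - v) * (8/3 - u * v)" unfolding A_def B_def by (simp add: field_simps power2_eq_square)
  have "hc c u - hc c v = c * (u - v) - 72 * c * (u / A - v / B) + 2 * (u - v)"
    unfolding hc_def A_def B_def by (simp add: algebra_simps)
  also have "\<dots> = (u - v) * (2 + c - 72 * c * (8/3 - u * v) / (A * B))"
    unfolding e1 e2 using p1 p2 by (simp add: field_simps)
  finally show ?thesis unfolding A_def B_def .
qed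

lemma hc_odd: "hc c (-x) = - hc c x"
  unfolding hc_def by (simp add: field_simps)

lemma hc_0[simp]: "hc c 0 = 0"
  unfolding hc_def by (simp add: power2_eq_square)

lemma den_pos: "8/3 + x^2 > (0::real)"
  by (simp add: add_pos_nonneg)

lemma hc_cont: "continuous_on S (hc c)"
  unfolding hc_def
  by (intro continuous_intros) (metis den_pos order_less_irrefl)+

lemma expand0:
  assumes c: "c \<ge> 1/2" and u: "\<bar>u\<bar> \<le> 4/5" and v: "\<bar>v\<bar> \<le> 4/5"
  shows "5/2 * \<bar>u - v\<bar> \<le> \<bar>hc c u - hc c v\<bar>"
proof -
  define A where "A = 8/3 + u^2"
  define B where "B = 8/3 + v^2"
  define R where "R = (8/3 - u * v) / (A * B)"
  have u2: "u^2 \<le> 16/25"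
  proof -
    have "u^2 = \<bar>u\<bar>^2" by simp
    also have "\<dots> \<le> (4/5)^2" using u by (intro power_mono) auto
    finally show ?thesis by (simp add: power2_eq_square)
  qed
  have v2: "v^2 \<le> 16/25"
  proof -
    have "v^2 = \<bar>v\<bar>^2" by simp
    also have "\<dots> \<le> (4/5)^2" using v by (intro power_mono) auto
    finally show ?thesis by (simp add: power2_eq_square)
  qed
  have uv: "u * v \<le> 16/25"
  proof -
    have "u * v \<le> \<bar>u\<bar> * \<bar>v\<bar>" by (metis abs_ge_self abs_mult)
    also have "\<dots> \<le> 4/5 * (4/5)" using u v by (intro mult_mono) auto
    finally show ?thesis by simp
  qed
  have A0: "A > 0" "A \<le> 248/75" unfolding A_def using u2 by (auto simp: add_pos_nonneg)
  have B0: "B > 0" "B \<le> 248/75" unfolding B_def using v2 by (auto simp: add_pos_nonneg)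
  have AB: "A * B \<le> (248/75) * (248/75)" using A0 B0 by (intro mult_mono) auto
  have ABp: "A * B > 0" using A0 B0 by simp
  have "(152/75) / ((248/75) * (248/75)) \<le> R"
    unfolding R_def using uv AB ABp by (intro frac_le) auto
  then have R: "R \<ge> 11400 / 61504" by simp
  have K: "2 + c - 72 * c * R \<le> -5/2"
  proof -
    have "c * (72 * R - 1) \<ge> 1/2 * (72 * (11400 / 61504) - 1)"
      using c R by (intro mult_mono) auto
    then show ?thesis by (simp add: algebra_simps)
  qed
  have "hc c u - hc c v = (u - v) * (2 + c - 72 * c * R)"
    unfolding hc_diff R_def A_def B_def by simp
  then have "\<bar>hc c u - hc c v\<bar> = \<bar>u - v\<bar> * \<bar>2 + c - 72 * c * R\<bar>"
    by (simp add: abs_mult)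
  moreover have "\<bar>2 + c - 72 * c * R\<bar> \<ge> 5/2" using K by simp
  ultimately show ?thesis
    by (metis abs_ge_zero mult.commute mult_left_mono)
qed

lemma expandP:
  assumes c: "c \<ge> 1/2" and u: "u \<ge> 5/2" and v: "v \<ge> 5/2"
  shows "\<exists>K. K \<ge> 5/2 \<and> hc c u - hc c v = (u - v) * K"
proof -
  define A where "A = 8/3 + u^2"
  define B where "B = 8/3 + v^2"
  have A0: "A > 0" unfolding A_def by (auto simp: add_pos_nonneg)
  have B0: "B > 0" unfolding B_def by (auto simp: add_pos_nonneg)
  have "u * v \<ge> 5/2 * (5/2)" using u v by (intro mult_mono) auto
  then have "8/3 - u * v \<le> 0" by simp
  then have "(8/3 - u * v) / (A * B) \<le> 0" using A0 B0 by (simp add: divide_nonpos_pos)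
  then have "(72 * c) * ((8/3 - u * v) / (A * B)) \<le> 0" using c by (intro mult_nonneg_nonpos) auto
  moreover have "72 * c * (8/3 - u * v) / (A * B) = (72 * c) * ((8/3 - u * v) / (A * B))" by simp
  ultimately have "72 * c * (8/3 - u * v) / (A * B) \<le> 0" by linarith
  then have "2 + c - 72 * c * (8/3 - u * v) / (A * B) \<ge> 2 + c" by simp
  then show ?thesis using c unfolding hc_diff A_def B_def
    by (intro exI[of _ "2 + c - 72 * c * (8/3 - u * v) / ((8/3 + u^2) * (8/3 + v^2))"]) auto
qed

lemma expandP':
  assumes c: "c \<ge> 1/2" and u: "u \<ge> 5/2" and v: "v \<ge> 5/2"
  shows "5/2 * \<bar>u - v\<bar> \<le> \<bar>hc c u - hc c v\<bar>"
proof -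
  obtain K where K: "K \<ge> 5/2" "hc c u - hc c v = (u - v) * K" using expandP[OF assms] by blast
  then have "\<bar>hc c u - hc c v\<bar> = \<bar>u - v\<bar> * K" by (simp add: abs_mult)
  then show ?thesis using K by (metis abs_ge_zero mult.commute mult_left_mono)
qed

lemma monoP:
  assumes c: "c \<ge> 1/2" and u: "u \<ge> 5/2" and v: "v \<ge> 5/2" and "u \<le> v"
  shows "hc c u \<le> hc c v"
proof -
  obtain K where K: "K \<ge> 5/2" "hc c u - hc c v = (u - v) * K" using expandP[OF assms(1-3)] by blast
  have "(u - v) * K \<le> 0" using K assms(4) by (simp add: mult_nonpos_nonneg)
  then show ?thesis using K by simp
qed

lemma val1: "c \<ge> 1/2 \<Longrightarrow> hc c (5/2) \<le> -8/5"
  unfolding hc_def by (simp add: power2_eq_square)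

lemma val2: "c \<ge> 0 \<Longrightarrow> hc c 9 \<ge> 8/5"
  unfolding hc_def by (simp add: power2_eq_square)

lemma val3: "c \<ge> 0 \<Longrightarrow> c \<le> 7/10 \<Longrightarrow> hc c (11/2) \<ge> 8/5"
  unfolding hc_def by (simp add: power2_eq_square)

lemma val4: "c \<ge> 1/2 \<Longrightarrow> hc c (4/5) \<le> -(11/2 + 4/5)"
  unfolding hc_def by (simp add: power2_eq_square)

lemma val5: "c \<ge> 7/10 \<Longrightarrow> hc c (4/5) \<le> -(9 + 4/5)"
  unfolding hc_def by (simp add: power2_eq_square)


definition Bc :: "real \<Rightarrow> real" where
  "Bc c = (if 7/10 \<le> c then 9 else 11/2)"

definition Iset :: "real \<Rightarrow> bool \<Rightarrow> real set" where
  "Iset c s = (if s then {5/2..Bc c} else {-4/5..4/5})"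

definition hinv :: "real \<Rightarrow> bool \<Rightarrow> real \<Rightarrow> real" where
  "hinv c s t = (THE y. y \<in> Iset c s \<and> hc c y = t)"

lemma Bc_bounds: "11/2 \<le> Bc c" "Bc c \<le> 9"
  unfolding Bc_def by auto

lemma hBc: "c \<ge> 1/2 \<Longrightarrow> hc c (Bc c) \<ge> 8/5"
  unfolding Bc_def using val2[of c] val3[of c] by auto

lemma h45: "c \<ge> 1/2 \<Longrightarrow> hc c (4/5) \<le> -(Bc c + 4/5)"
  unfolding Bc_def using val4[of c] val5[of c] by auto

lemma hm45: "c \<ge> 1/2 \<Longrightarrow> hc c (-4/5) \<ge> Bc c + 4/5"
  using h45[of c] hc_odd[of c "4/5"] by simp

lemma Iset_bound: "y \<in> Iset c s \<Longrightarrow> \<bar>y\<bar> \<le> 9"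
  unfolding Iset_def using Bc_bounds[of c] by (auto split: if_splits)

lemma expandI:
  assumes "c \<ge> 1/2" "u \<in> Iset c s" "v \<in> Iset c s"
  shows "5/2 * \<bar>u - v\<bar> \<le> \<bar>hc c u - hc c v\<bar>"
proof (cases s)
  case True
  then show ?thesis using assms expandP'[of c u v] unfolding Iset_def by auto
next
  case False
  then show ?thesis using assms expand0[of c u v] unfolding Iset_def by auto
qed

lemma exP:
  assumes c: "c \<ge> 1/2" and t: "\<bar>t\<bar> \<le> 8/5"
  shows "\<exists>y \<in> Iset c True. hc c y = t"
proof -
  have "\<exists>x. 5/2 \<le> x \<and> x \<le> Bc c \<and> hc c x = t"
    using val1[OF c] hBc[OF c] t Bc_bounds[of c] by (intro IVT' hc_cont) auto
  then show ?thesis unfolding Iset_def by auto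
qed

lemma ex0:
  assumes c: "c \<ge> 1/2" and t: "\<bar>t\<bar> \<le> Bc c + 4/5"
  shows "\<exists>y \<in> Iset c False. hc c y = t"
proof -
  have "\<exists>x. -4/5 \<le> x \<and> x \<le> 4/5 \<and> hc c x = t"
    using h45[OF c] hm45[OF c] t by (intro IVT2' hc_cont) auto
  then show ?thesis unfolding Iset_def by auto
qed

lemma hinv_eq:
  assumes c: "c \<ge> 1/2" and y: "y \<in> Iset c s" "hc c y = t"
  shows "hinv c s t = y"
  unfolding hinv_def
proof (rule the_equality)
  show "y \<in> Iset c s \<and> hc c y = t" using y by simp
  fix z assume z: "z \<in> Iset c s \<and> hc c z = t"
  then have "5/2 * \<bar>z - y\<bar> \<le> \<bar>hc c z - hc c y\<bar>" using expandI[OF c] y by blast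
  then show "z = y" using z y by simp
qed

lemma hinv_prop:
  assumes c: "c \<ge> 1/2" and ex: "\<exists>y \<in> Iset c s. hc c y = t"
  shows "hinv c s t \<in> Iset c s \<and> hc c (hinv c s t) = t"
  using ex hinv_eq[OF c] by auto

definition sep :: "(int \<Rightarrow> bool) \<Rightarrow> bool" where
  "sep \<sigma> \<longleftrightarrow> (\<forall>n. \<sigma> n \<longrightarrow> \<not> \<sigma> (n+1) \<and> \<not> \<sigma> (n+2))"

lemma range_ok:
  assumes c: "c \<ge> 1/2" and sp: "sep \<sigma>" and x: "\<And>m. x m \<in> Iset c (\<sigma> m)"
  shows "\<exists>y \<in> Iset c (\<sigma> n). hc c y = x (n-1) + x (n+1)"
proof (cases "\<sigma> n")
  case True
  have "\<not> \<sigma> (n-1)" using sp True unfolding sep_def by (metis diff_add_cancel)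
  moreover have "\<not> \<sigma> (n+1)" using sp True unfolding sep_def by blast
  ultimately have "\<bar>x (n-1)\<bar> \<le> 4/5" "\<bar>x (n+1)\<bar> \<le> 4/5"
    using x[of "n-1"] x[of "n+1"] unfolding Iset_def by auto
  then have "\<bar>x (n-1) + x (n+1)\<bar> \<le> 8/5" by linarith
  then show ?thesis using exP[OF c] True by simp
next
  case False
  have nb: "\<not> (\<sigma> (n-1) \<and> \<sigma> (n+1))"
  proof
    assume h: "\<sigma> (n-1) \<and> \<sigma> (n+1)"
    then have "\<not> \<sigma> (n - 1 + 2)" using sp unfolding sep_def by blast
    then show False using h by (simp add: algebra_simps)
  qed
  have b1: "-4/5 \<le> x m \<and> x m \<le> Bc c" for m
    using x[of m] Bc_bounds[of c] unfolding Iset_def by (auto split: if_splits)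
  have b2: "\<not> \<sigma> m \<Longrightarrow> x m \<le> 4/5" for m
    using x[of m] unfolding Iset_def by auto
  have "\<bar>x (n-1) + x (n+1)\<bar> \<le> Bc c + 4/5"
    using b1[of "n-1"] b1[of "n+1"] b2[of "n-1"] b2[of "n+1"] nb Bc_bounds[of c] by auto
  then show ?thesis using ex0[OF c] False by simp
qed



lemma bcontfun_of_bounded:
  fixes f :: "int \<Rightarrow> real"
  assumes "\<And>n. \<bar>f n\<bar> \<le> 9"
  shows "f \<in> bcontfun"
  using assms by (intro bcontfun_normI) auto

lemma bc_int_convergent:
  fixes f :: "nat \<Rightarrow> (int \<Rightarrow>\<^sub>C real)"
  assumes "Cauchy f"
  shows "convergent f"
proof -
  obtain g where "uniform_limit UNIV f g sequentially"
    using assms uniformly_convergent_eq_cauchy[of "\<lambda>_. True" f]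
    unfolding Cauchy_def uniform_limit_sequentially_iff
    by (metis dist_fun_lt_imp_dist_val_lt)
  from uniform_limit_bcontfunE[OF this sequentially_bot]
  obtain l' where "g = apply_bcontfun l'" "(f \<longlonglongrightarrow> l')" by metis
  then show "convergent f"
    by (intro convergentI)
qed

lemma bc_int_complete:
  fixes S :: "(int \<Rightarrow>\<^sub>C real) set"
  assumes "closed S"
  shows "complete S"
  unfolding complete_def
proof (intro allI impI)
  fix f :: "nat \<Rightarrow> (int \<Rightarrow>\<^sub>C real)"
  assume f: "(\<forall>n. f n \<in> S) \<and> Cauchy f"
  then obtain l where l: "f \<longlonglongrightarrow> l" using bc_int_convergent convergent_def by blast
  then have "l \<in> S" using assms f unfolding closed_sequential_limits by blast
  then show "\<exists>l\<in>S. f \<longlonglongrightarrow> l" using l by blast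
qed

lemma exists_orbit:
  assumes c: "c \<ge> 1/2" and sp: "sep \<sigma>"
    and clA: "\<And>n. closed (A n)" and AI: "\<And>n. A n \<subseteq> Iset c (\<sigma> n)"
    and y0: "\<And>n. y0 n \<in> A n"
    and pres: "\<And>x n. (\<And>m. x m \<in> A m) \<Longrightarrow> hinv c (\<sigma> n) (x (n-1) + x (n+1)) \<in> A n"
  shows "\<exists>x. (\<forall>n. x n \<in> A n) \<and> (\<forall>n. hc c (x n) = x (n-1) + x (n+1))"
proof -
  define S where "S = {f :: int \<Rightarrow>\<^sub>C real. \<forall>n. apply_bcontfun f n \<in> A n}"
  define g where "g f = (\<lambda>n. hinv c (\<sigma> n) (apply_bcontfun f (n-1) + apply_bcontfun f (n+1)))"
    for f :: "int \<Rightarrow>\<^sub>C real"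
  define T where "T f = Bcontfun (g f)" for f
  have inA_bc: "f \<in> bcontfun" if "\<And>n. f n \<in> A n" for f :: "int \<Rightarrow> real"
  proof (rule bcontfun_of_bounded)
    fix n show "\<bar>f n\<bar> \<le> 9" using that[of n] AI[of n] Iset_bound[of "f n" c "\<sigma> n"] by (meson subsetD)
  qed
  have gA: "g f n \<in> A n" if "f \<in> S" for f n
  proof -
    have "\<And>m. apply_bcontfun f m \<in> A m" using that unfolding S_def by simp
    from pres[OF this, of n] show ?thesis unfolding g_def .
  qed
  have Tf: "apply_bcontfun (T f) = g f" if "f \<in> S" for f
  proof -
    have "g f \<in> bcontfun" using gA[OF that] by (rule inA_bc)
    then show ?thesis unfolding T_def by (rule Bcontfun_inverse)
  qed
  have TS: "T ` S \<subseteq> S"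
  proof
    fix h assume "h \<in> T ` S"
    then obtain f where f: "f \<in> S" "h = T f" by blast
    show "h \<in> S" unfolding S_def using gA[OF f(1)] Tf[OF f(1)] f(2) by simp
  qed
  have Sne: "S \<noteq> {}"
  proof -
    have "y0 \<in> bcontfun" using y0 by (rule inA_bc)
    then have "apply_bcontfun (Bcontfun y0) = y0" by (rule Bcontfun_inverse)
    then have "Bcontfun y0 \<in> S" unfolding S_def using y0 by simp
    then show ?thesis by blast
  qed
  have clS: "closed S"
    unfolding closed_sequential_limits
  proof (intro allI impI)
    fix f l
    assume fl: "(\<forall>n. f n \<in> S) \<and> f \<longlonglongrightarrow> l"
    show "l \<in> S" unfolding S_def
    proof (intro CollectI allI)
      fix n
      have lim1: "(\<lambda>k. apply_bcontfun (f k) n) \<longlonglongrightarrow> apply_bcontfun l n"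
        using tendsto_bcontfun_uniform_limit[OF conjunct2[OF fl]]
        by (rule tendsto_uniform_limitI) simp
      have ev: "eventually (\<lambda>k. apply_bcontfun (f k) n \<in> A n) sequentially"
        using fl unfolding S_def by simp
      show "apply_bcontfun l n \<in> A n"
        by (rule Lim_in_closed_set[OF clA ev sequentially_bot lim1])
    qed
  qed
  have lip: "dist (T f) (T h) \<le> 4/5 * dist f h" if fh: "f \<in> S" "h \<in> S" for f h
  proof (rule dist_bound)
    fix n
    have fI: "apply_bcontfun f m \<in> Iset c (\<sigma> m)" for m
    proof -
      have "apply_bcontfun f m \<in> A m" using fh(1) unfolding S_def by simp
      then show ?thesis using AI[of m] by (rule subsetD[rotated])
    qed
    have hI: "apply_bcontfun h m \<in> Iset c (\<sigma> m)" for m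
    proof -
      have "apply_bcontfun h m \<in> A m" using fh(2) unfolding S_def by simp
      then show ?thesis using AI[of m] by (rule subsetD[rotated])
    qed
    note p1 = hinv_prop[OF c range_ok[OF c sp fI, of n]]
    note p2 = hinv_prop[OF c range_ok[OF c sp hI, of n]]
    have "5/2 * \<bar>g f n - g h n\<bar> \<le> \<bar>hc c (g f n) - hc c (g h n)\<bar>"
      unfolding g_def by (rule expandI[OF c conjunct1[OF p1] conjunct1[OF p2]])
    also have "\<dots> = \<bar>(f (n-1) - h (n-1)) + (f (n+1) - h (n+1))\<bar>"
      unfolding g_def using p1 p2 by (simp add: algebra_simps)
    also have "\<dots> \<le> \<bar>f (n-1) - h (n-1)\<bar> + \<bar>f (n+1) - h (n+1)\<bar>" by (rule abs_triangle_ineq)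
    also have "\<dots> \<le> dist f h + dist f h"
      using dist_bounded[of f "n-1" h] dist_bounded[of f "n+1" h]
      by (simp add: dist_real_def)
    finally have "\<bar>g f n - g h n\<bar> \<le> 4/5 * dist f h" by simp
    then show "dist (apply_bcontfun (T f) n) (apply_bcontfun (T h) n) \<le> 4/5 * dist f h"
      using Tf[OF fh(1)] Tf[OF fh(2)] by (simp add: dist_real_def)
  qed
  have cS: "complete S" using clS by (rule bc_int_complete)
  have "\<exists>!f\<in>S. T f = f"
    by (rule Banach_fix[OF cS Sne _ _ TS lip]) auto
  then obtain f where f: "f \<in> S" "T f = f" by blast
  define x where "x = apply_bcontfun f"
  have xA: "\<And>n. x n \<in> A n" using f unfolding S_def x_def by simp
  have xI: "x n \<in> Iset c (\<sigma> n)" for n using xA[of n] AI[of n] by (rule subsetD[rotated])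
  have xg: "x n = g f n" for n using Tf[OF f(1)] f(2) unfolding x_def by simp
  have "hc c (x n) = x (n-1) + x (n+1)" for n
  proof -
    note p = hinv_prop[OF c range_ok[OF c sp xI, of n]]
    show ?thesis using p xg[of n] unfolding g_def x_def by simp
  qed
  then show ?thesis using xA by blast
qed

lemma orbit_unique:
  fixes x x' :: "int \<Rightarrow> real" and \<sigma> :: "int \<Rightarrow> bool"
  assumes c: "c \<ge> 1/2"
    and x: "\<And>n. x n \<in> Iset c (\<sigma> n)" "\<And>n. hc c (x n) = x (n-1) + x (n+1)"
    and x': "\<And>n. x' n \<in> Iset c (\<sigma> n)" "\<And>n. hc c (x' n) = x' (n-1) + x' (n+1)"
  shows "x = x'"
proof -
  have bx: "x \<in> bcontfun" using x(1) Iset_bound by (intro bcontfun_of_bounded) blast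
  have bx': "x' \<in> bcontfun" using x'(1) Iset_bound by (intro bcontfun_of_bounded) blast
  define F where "F = Bcontfun x"
  define F' where "F' = Bcontfun x'"
  have aF: "apply_bcontfun F = x" unfolding F_def using bx by (simp add: Bcontfun_inverse)
  have aF': "apply_bcontfun F' = x'" unfolding F'_def using bx' by (simp add: Bcontfun_inverse)
  have "dist F F' \<le> 4/5 * dist F F'"
  proof (rule dist_bound)
    fix n
    have "5/2 * \<bar>x n - x' n\<bar> \<le> \<bar>hc c (x n) - hc c (x' n)\<bar>"
      using expandI[OF c x(1) x'(1)] .
    also have "\<dots> = \<bar>(x (n-1) - x' (n-1)) + (x (n+1) - x' (n+1))\<bar>"
      using x(2)[of n] x'(2)[of n] by (simp add: algebra_simps)
    also have "\<dots> \<le> \<bar>x (n-1) - x' (n-1)\<bar> + \<bar>x (n+1) - x' (n+1)\<bar>" by (rule abs_triangle_ineq)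
    also have "\<dots> \<le> dist F F' + dist F F'"
      using dist_bounded[of F "n-1" F'] dist_bounded[of F "n+1" F'] aF aF'
      by (simp add: dist_real_def)
    finally have "\<bar>x n - x' n\<bar> \<le> 4/5 * dist F F'" by simp
    then show "dist (apply_bcontfun F n) (apply_bcontfun F' n) \<le> 4/5 * dist F F'"
      using aF aF' by (simp add: dist_real_def)
  qed
  then have "dist F F' = 0" using zero_le_dist[of F F'] by linarith
  then show ?thesis using aF aF' by simp
qed



definition Fc :: "real \<Rightarrow> real \<times> real \<Rightarrow> real \<times> real" where
  "Fc c = (\<lambda>(x, y). (hc c x - y, x))"

lemma Fc_apply: "Fc c (a, b) = (hc c a - b, a)"
  unfolding Fc_def by simp

lemma iter_orbit:
  assumes rec: "\<And>n. hc c (x n) = x (n-1) + x (n+1)"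
  shows "(Fc c ^^ k) (x j, x (j-1)) = (x (j + int k), x (j + int k - 1))"
proof (induction k)
  case 0
  then show ?case by simp
next
  case (Suc k)
  define m where "m = j + int k"
  have "(Fc c ^^ Suc k) (x j, x (j-1)) = Fc c (x m, x (m-1))"
    using Suc unfolding m_def by simp
  also have "\<dots> = (x (m+1), x m)"
    unfolding Fc_apply using rec[of m] by simp
  finally show ?case unfolding m_def by (simp add: algebra_simps)
qed

lemma char_no_unit:
  fixes z :: complex and t :: real
  assumes t: "t \<le> -11" and z: "cmod z = 1"
  shows "z^2 - complex_of_real t * z + 1 \<noteq> 0"
proof
  assume eq: "z^2 - complex_of_real t * z + 1 = 0"
  have zz: "z * cnj z = 1"
    using z complex_norm_square[of z] by simp
  have "(z^2 - complex_of_real t * z + 1) * cnj z = 0" using eq by simp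
  then have "z * (z * cnj z) - complex_of_real t * (z * cnj z) + cnj z = 0"
    by (simp add: algebra_simps power2_eq_square)
  then have "z - complex_of_real t + cnj z = 0" using zz by simp
  then have "Re (z - complex_of_real t + cnj z) = 0" by simp
  then have "2 * Re z = t" by simp
  moreover have "\<bar>Re z\<bar> \<le> 1" using abs_Re_le_cmod[of z] z by simp
  ultimately show False using t by linarith
qed

lemma hc_deriv0: "(hc c has_real_derivative (2 - 26 * c)) (at 0)"
proof -
  have "(hc c has_real_derivative (c * (1 - (8/3*27 * (8/3 + 0^2) - 8/3*27*0*(2*0)) / (8/3 + 0^2)^2) + 2)) (at 0)"
    unfolding hc_def
    by (auto intro!: derivative_eq_intros simp: power2_eq_square)
  then show ?thesis by (simp add: power2_eq_square algebra_simps)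
qed


lemma Fc_alt: "Fc c = (\<lambda>p. (hc c (fst p) - snd p, fst p))"
  unfolding Fc_def by (simp add: fun_eq_iff split_def)

lemma Fc_deriv:
  "(Fc c has_derivative (\<lambda>h. ((2 - 26 * c) * fst h - snd h, fst h))) (at (0, 0))"
proof -
  have d0: "(hc c has_derivative (\<lambda>t. (2 - 26 * c) * t)) (at (fst (0::real, 0::real)))"
    using hc_deriv0[of c] unfolding has_field_derivative_def by simp
  have d1: "((\<lambda>p. hc c (fst p)) has_derivative (\<lambda>h. (2 - 26 * c) * fst h)) (at (0::real, 0::real))"
    using has_derivative_compose[OF has_derivative_fst[OF has_derivative_ident] d0] by simp
  have d2: "((\<lambda>p. hc c (fst p) - snd p) has_derivative (\<lambda>h. (2 - 26 * c) * fst h - snd h)) (at (0::real, 0::real))"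
    by (intro has_derivative_diff d1 has_derivative_snd has_derivative_ident)
  show ?thesis unfolding Fc_alt
    by (intro has_derivative_Pair d2 has_derivative_fst has_derivative_ident)
qed

lemma hyp0:
  assumes c: "c \<ge> 1/2"
  shows "hyperbolic_fixed_point (Fc c) (0, 0)"
  unfolding hyperbolic_fixed_point_def
proof (intro conjI exI)
  show "Fc c (0, 0) = (0, 0)" by (simp add: Fc_apply)
  show "(Fc c has_derivative (\<lambda>h. ((2 - 26 * c) * fst h - snd h, fst h))) (at (0, 0))"
    by (rule Fc_deriv)
  have t: "2 - 26 * c \<le> -11" using c by simp
  show "let a = fst ((\<lambda>h. ((2 - 26 * c) * fst h - snd h, fst h)) (1, 0));
            c' = snd ((\<lambda>h. ((2 - 26 * c) * fst h - snd h, fst h)) (1, 0));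
            b = fst ((\<lambda>h. ((2 - 26 * c) * fst h - snd h, fst h)) (0, 1));
            e = snd ((\<lambda>h. ((2 - 26 * c) * fst h - snd h, fst h)) (0, 1))
        in \<forall>z::complex. cmod z = 1 \<longrightarrow>
              z^2 - complex_of_real (a + e) * z + complex_of_real (a * e - b * c') \<noteq> 0"
  proof -
    have h: "z^2 - complex_of_real (2 - 26 * c) * z \<noteq> -1" if "cmod z = 1" for z
      unfolding eq_neg_iff_add_eq_0 using char_no_unit[OF t that] .
    have "z^2 - (2 - 26 * complex_of_real c) * z \<noteq> -1" if "cmod z = 1" for z
      using h[OF that] by simp
    then show ?thesis by (simp add: Let_def)
  qed
qed



definition wt :: "int \<Rightarrow> real" where
  "wt n = 9 * (1/2) ^ nat \<bar>n\<bar>"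

lemma wt_rec:
  assumes "n \<noteq> 0"
  shows "wt (n-1) + wt (n+1) = 5/2 * wt n"
proof (cases "n > 0")
  case True
  then obtain j where j: "nat \<bar>n\<bar> = Suc j" "nat \<bar>n-1\<bar> = j" "nat \<bar>n+1\<bar> = Suc (Suc j)"
    by (intro that[of "nat (n-1)"]) auto
  show ?thesis unfolding wt_def j by simp
next
  case False
  then have "n < 0" using assms by simp
  then obtain j where j: "nat \<bar>n\<bar> = Suc j" "nat \<bar>n+1\<bar> = j" "nat \<bar>n-1\<bar> = Suc (Suc j)"
    by (intro that[of "nat (-n-1)"]) auto
  show ?thesis unfolding wt_def j by simp
qed

lemma Iset_closed: "closed (Iset c s)"
  unfolding Iset_def by auto

lemma tend0:
  fixes f :: "nat \<Rightarrow> real"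
  assumes "\<And>k. \<bar>f k\<bar> \<le> C * (1/2)^k"
  shows "f \<longlonglongrightarrow> 0"
proof (rule Lim_null_comparison[where g = "\<lambda>k. C * (1/2)^k"])
  show "\<forall>\<^sub>F k in sequentially. norm (f k) \<le> C * (1/2)^k" using assms by simp
  show "(\<lambda>k. C * (1/2::real)^k) \<longlonglongrightarrow> 0"
    by (intro tendsto_mult_right_zero LIMSEQ_power_zero) simp
qed

lemma homoclinic_ex:
  assumes c: "c \<ge> 1/2"
  shows "\<exists>p. homoclinic_point (Fc c) p"
proof -
  define \<sigma> where "\<sigma> = (\<lambda>n::int. n = 0)"
  define A where "A n = Iset c (\<sigma> n) \<inter> {- wt n .. wt n}" for n
  define y0 where "y0 n = (if n = 0 then 5/2 else (0::real))" for n :: int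
  have sp: "sep \<sigma>" unfolding sep_def \<sigma>_def by simp
  have clA: "closed (A n)" for n unfolding A_def by (intro closed_Int Iset_closed closed_atLeastAtMost)
  have AI: "A n \<subseteq> Iset c (\<sigma> n)" for n unfolding A_def by blast
  have wt0: "wt 0 = 9" unfolding wt_def by simp
  have wtpos: "wt n \<ge> 0" for n unfolding wt_def by simp
  have y0A: "y0 n \<in> A n" for n
    using Bc_bounds[of c] wt0 wtpos[of n] unfolding A_def y0_def Iset_def \<sigma>_def by auto
  have pres: "hinv c (\<sigma> n) (x (n-1) + x (n+1)) \<in> A n" if xA: "\<And>m. x m \<in> A m" for x n
  proof -
    have xI: "x m \<in> Iset c (\<sigma> m)" for m using xA[of m] AI[of m] by (rule subsetD[rotated])
    note p = hinv_prop[OF c range_ok[OF c sp xI, of n]]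
    define v where "v = hinv c (\<sigma> n) (x (n-1) + x (n+1))"
    have vI: "v \<in> Iset c (\<sigma> n)" and hv: "hc c v = x (n-1) + x (n+1)" using p unfolding v_def by auto
    have "\<bar>v\<bar> \<le> wt n"
    proof (cases "n = 0")
      case True
      then show ?thesis using vI Bc_bounds[of c] wt0 unfolding Iset_def \<sigma>_def by auto
    next
      case False
      have z: "0 \<in> Iset c (\<sigma> n)" using False unfolding Iset_def \<sigma>_def by simp
      have "5/2 * \<bar>v - 0\<bar> \<le> \<bar>hc c v - hc c 0\<bar>" by (rule expandI[OF c vI z])
      also have "\<dots> = \<bar>x (n-1) + x (n+1)\<bar>" using hv by simp
      also have "\<dots> \<le> \<bar>x (n-1)\<bar> + \<bar>x (n+1)\<bar>" by (rule abs_triangle_ineq)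
      also have "\<dots> \<le> wt (n-1) + wt (n+1)"
        using xA[of "n-1"] xA[of "n+1"] unfolding A_def by auto
      also have "\<dots> = 5/2 * wt n" using wt_rec[OF False] .
      finally show ?thesis by simp
    qed
    then show ?thesis using vI unfolding A_def v_def by auto
  qed
  obtain x where xA: "\<forall>n. x n \<in> A n" and rec: "\<forall>n. hc c (x n) = x (n-1) + x (n+1)"
    using exists_orbit[OF c sp clA AI y0A pres] by blast
  have xw: "\<bar>x n\<bar> \<le> wt n" for n using xA[rule_format, of n] unfolding A_def by (simp add: abs_le_iff)
  have x0: "x 0 \<ge> 5/2" using xA[rule_format, of 0] unfolding A_def Iset_def \<sigma>_def by simp
  define p where "p = (x 0, x (-1))"
  have orb: "(Fc c ^^ k) p = (x (int k), x (int k - 1))" for k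
    using iter_orbit[of c x k 0] rec unfolding p_def by simp
  have stab: "p \<in> stable_set (Fc c) (0, 0)"
  proof -
    have a: "(\<lambda>k. x (int k)) \<longlonglongrightarrow> 0"
    proof (rule tend0[where C = 9])
      fix k show "\<bar>x (int k)\<bar> \<le> 9 * (1/2)^k" using xw[of "int k"] unfolding wt_def by simp
    qed
    have b: "(\<lambda>k. x (int k - 1)) \<longlonglongrightarrow> 0"
    proof (rule tend0[where C = 18])
      fix k
      have "(1/2::real) ^ nat \<bar>int k - 1\<bar> \<le> 2 * (1/2)^k"
      proof (cases k)
        case 0 then show ?thesis by simp
      next
        case (Suc j)
        then have "nat \<bar>int k - 1\<bar> = j" by simp
        then show ?thesis using Suc by simp
      qed
      then show "\<bar>x (int k - 1)\<bar> \<le> 18 * (1/2)^k" using xw[of "int k - 1"] unfolding wt_def by simp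
    qed
    show ?thesis using tendsto_Pair[OF a b] by (simp add: stable_set_def orb)
  qed
  have unst: "p \<in> unstable_set (Fc c) (0, 0)"
  proof -
    define s where "s k = (x (- int k), x (- int k - 1))" for k :: nat
    have s0: "s 0 = p" unfolding s_def p_def by simp
    have sS: "Fc c (s (Suc k)) = s k" for k
    proof -
      define m where "m = - int k - 1"
      have m1: "m - 1 = - int k - 2" and m2: "m + 1 = - int k" unfolding m_def by simp_all
      have "hc c (x m) = x (m - 1) + x (m + 1)" using rec by blast
      then have "hc c (x (- int k - 1)) = x (- int k - 2) + x (- int k)"
        unfolding m1 m2 unfolding m_def .
      then have r: "hc c (x (- int k - 1)) - x (- int k - 2) = x (- int k)" by simp
      have e1: "- int (Suc k) = - int k - 1" by simp
      have e2: "- int k - 1 - 1 = - int k - 2" by simp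
      have "s (Suc k) = (x (- int k - 1), x (- int k - 2))" by (simp only: s_def e1 e2)
      then have "Fc c (s (Suc k)) = (hc c (x (- int k - 1)) - x (- int k - 2), x (- int k - 1))"
        by (simp only: Fc_apply)
      then show ?thesis unfolding r s_def by simp
    qed
    have a: "(\<lambda>k. x (- int k)) \<longlonglongrightarrow> 0"
    proof (rule tend0[where C = 9])
      fix k show "\<bar>x (- int k)\<bar> \<le> 9 * (1/2)^k" using xw[of "- int k"] unfolding wt_def by simp
    qed
    have b: "(\<lambda>k. x (- int k - 1)) \<longlonglongrightarrow> 0"
    proof (rule tend0[where C = 9])
      fix k
      have "nat \<bar>- int k - 1\<bar> = Suc k" by simp
      then have "wt (- int k - 1) = 9 * (1/2)^k / 2" unfolding wt_def by simp
      then show "\<bar>x (- int k - 1)\<bar> \<le> 9 * (1/2)^k" using xw[of "- int k - 1"] by simp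
    qed
    have "s \<longlonglongrightarrow> (0, 0)" unfolding s_def using tendsto_Pair[OF a b] by simp
    then show ?thesis unfolding unstable_set_def using s0 sS by blast
  qed
  have "p \<noteq> (0, 0)" using x0 unfolding p_def by auto
  then have "homoclinic_point (Fc c) p"
    unfolding homoclinic_point_def using hyp0[OF c] stab unst by blast
  then show ?thesis by blast
qed



definition sigN :: "nat \<Rightarrow> int \<Rightarrow> bool" where
  "sigN N n = (int N dvd n)"

definition orbN :: "real \<Rightarrow> nat \<Rightarrow> int \<Rightarrow> real" where
  "orbN c N = (SOME x. (\<forall>n. x n \<in> Iset c (sigN N n)) \<and> (\<forall>n. hc c (x n) = x (n-1) + x (n+1)))"

lemma sep_sigN:
  assumes "N \<ge> 3"
  shows "sep (sigN N)"
  unfolding sep_def sigN_def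
proof (intro allI impI conjI)
  fix n :: int assume d: "int N dvd n"
  show "\<not> int N dvd n + 1"
  proof
    assume "int N dvd n + 1"
    then have "int N dvd 1" using d by (metis add_diff_cancel_left' dvd_diff)
    then show False using assms by simp
  qed
  show "\<not> int N dvd n + 2"
  proof
    assume "int N dvd n + 2"
    then have "int N dvd 2" using d by (metis add_diff_cancel_left' dvd_diff)
    then have "int N \<le> 2" by (rule zdvd_imp_le) simp
    then show False using assms by simp
  qed
qed

lemma orbN_prop:
  assumes c: "c \<ge> 1/2" and N: "N \<ge> 3"
  shows "(\<forall>n. orbN c N n \<in> Iset c (sigN N n)) \<and> (\<forall>n. hc c (orbN c N n) = orbN c N (n-1) + orbN c N (n+1))"
proof -
  define A where "A n = Iset c (sigN N n)" for n
  define y0 where "y0 n = (if sigN N n then 5/2 else (0::real))" for n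
  have y0A: "y0 n \<in> A n" for n
    using Bc_bounds[of c] unfolding A_def y0_def Iset_def by auto
  have pres: "hinv c (sigN N n) (x (n-1) + x (n+1)) \<in> A n" if xA: "\<And>m. x m \<in> A m" for x n
    using hinv_prop[OF c range_ok[OF c sep_sigN[OF N] xA[unfolded A_def], of n]] unfolding A_def by blast
  have "\<exists>x. (\<forall>n. x n \<in> A n) \<and> (\<forall>n. hc c (x n) = x (n-1) + x (n+1))"
    by (rule exists_orbit[OF c sep_sigN[OF N] _ _ y0A pres]) (auto simp: A_def Iset_closed)
  then show ?thesis unfolding orbN_def A_def by (rule someI_ex)
qed

lemma orbN_periodic:
  assumes c: "c \<ge> 1/2" and N: "N \<ge> 3"
  shows "orbN c N (n + int N) = orbN c N n"
proof -
  define x where "x = orbN c N"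
  define x' where "x' = (\<lambda>n. x (n + int N))"
  have P: "\<forall>n. x n \<in> Iset c (sigN N n)" "\<forall>n. hc c (x n) = x (n-1) + x (n+1)"
    using orbN_prop[OF c N] unfolding x_def by auto
  have sh: "sigN N (n + int N) = sigN N n" for n unfolding sigN_def by simp
  have "x' = x"
  proof (rule orbit_unique[OF c, of x' "sigN N" x])
    fix n
    show "x' n \<in> Iset c (sigN N n)" using P(1)[rule_format, of "n + int N"] sh[of n] unfolding x'_def by simp
    have "hc c (x (n + int N)) = x (n + int N - 1) + x (n + int N + 1)" using P(2) by blast
    moreover have "n + int N - 1 = (n - 1) + int N" "n + int N + 1 = (n + 1) + int N" by simp_all
    ultimately show "hc c (x' n) = x' (n-1) + x' (n+1)" unfolding x'_def by simp
    show "x n \<in> Iset c (sigN N n)" using P(1) by blast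
    show "hc c (x n) = x (n-1) + x (n+1)" using P(2) by blast
  qed
  then show ?thesis unfolding x'_def x_def by metis
qed

lemma periodic_inf:
  assumes c: "c \<ge> 1/2"
  shows "infinite (periodic_points (Fc c))"
proof -
  define P where "P N = (orbN c N 0, orbN c N (-1))" for N
  have orb: "(Fc c ^^ k) (P N) = (orbN c N (int k), orbN c N (int k - 1))" if N: "N \<ge> 3" for N k
    using iter_orbit[of c "orbN c N" k 0] orbN_prop[OF c N] unfolding P_def by simp
  have per: "P N \<in> periodic_points (Fc c)" if N: "N \<ge> 3" for N
  proof -
    have "(Fc c ^^ N) (P N) = (orbN c N (int N), orbN c N (int N - 1))" by (rule orb[OF N])
    also have "\<dots> = P N"
      unfolding P_def using orbN_periodic[OF c N, of 0] orbN_periodic[OF c N, of "-1"]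
      by simp
    finally have "(Fc c ^^ N) (P N) = P N" .
    moreover have "N > 0" using N by simp
    ultimately show ?thesis unfolding periodic_points_def by blast
  qed
  have neq: "P M \<noteq> P N" if MN: "3 \<le> M" "M < N" for M N
  proof
    assume eq: "P M = P N"
    have "(Fc c ^^ M) (P M) = (Fc c ^^ M) (P N)" using eq by simp
    moreover have "(Fc c ^^ M) (P M) = (orbN c M (int M), orbN c M (int M - 1))" by (rule orb[OF MN(1)])
    moreover have "(Fc c ^^ M) (P N) = (orbN c N (int M), orbN c N (int M - 1))" by (rule orb) (use MN in simp)
    ultimately have e: "orbN c M (int M) = orbN c N (int M)" by simp
    have "sigN M (int M)" unfolding sigN_def by simp
    moreover have "orbN c M (int M) \<in> Iset c (sigN M (int M))"
      using orbN_prop[OF c MN(1)] by simp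
    ultimately have ge: "orbN c M (int M) \<ge> 5/2" unfolding Iset_def by simp
    have "\<not> sigN N (int M)"
    proof
      assume "sigN N (int M)"
      then have "N dvd M" unfolding sigN_def by simp
      then show False using MN by (simp add: nat_dvd_not_less)
    qed
    moreover have "orbN c N (int M) \<in> Iset c (sigN N (int M))"
      using orbN_prop[OF c, of N] MN by simp
    ultimately have "orbN c N (int M) \<le> 4/5" unfolding Iset_def by simp
    then show False using e ge by simp
  qed
  have inj: "inj_on P {3..}"
  proof (rule inj_onI)
    fix M N assume "M \<in> {3::nat..}" "N \<in> {3::nat..}" "P M = P N"
    then show "M = N" using neq[of M N] neq[of N M] by (metis atLeast_iff linorder_neqE_nat)
  qed
  have "infinite (P ` {3..})"
    using finite_imageD[OF _ inj] infinite_Ici[of "3::nat"] by blast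
  moreover have "P ` {3..} \<subseteq> periodic_points (Fc c)" using per by auto
  ultimately show ?thesis using infinite_super by blast
qed

theorem theorem4p3:
  fixes d :: real
  assumes "0 < d" and "d \<le> 20"
  shows "(\<exists>p. homoclinic_point (lorenzF 10 27 (8/3) d) p) \<and>
         infinite (periodic_points (lorenzF 10 27 (8/3) d))"
proof -
  have c: "10 / d \<ge> 1/2" using assms by (simp add: field_simps)
  have e: "lorenzF 10 27 (8/3) d = Fc (10 / d)" unfolding lorenz_eq Fc_def ..
  show ?thesis unfolding e using homoclinic_ex[OF c] periodic_inf[OF c] by blast
qed


end
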